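(* In the discrete torus model with frame group $\mathbb{Z}_4$ and the 2-dimensional calculus $\mathcal C=\{\bar1,\bar3\}$ (context), the torsion-free and cotorsion-free spin connections are exactly \[A_{\bar1}=(-\alpha-\tfrac{s_1}{2})e_1+(\beta-\tfrac{s_2}{2})e_2,\qquad A_{\bar3}=(\beta-\tfrac{s_1}{2})e_1+(\alpha-\tfrac{s_2}{2})e_2,\] for functions $\alpha,\beta$ such that $a=\alpha+\beta$, $b=\beta-\alpha$ satisfy $(R_1+R_2)a=0=(R_1+R_2)b$, where $s_1=\bar\partial^2\Theta_1$, $s_2=\bar\partial^1\Theta_2$. Their covariant derivative is \[\nabla e_1=(b-s_1)e_1\otimes e_1+a\,e_1\otimes e_2+(a-s_2)e_2\otimes e_1-b\,e_2\otimes e_2,\] \[\nabla e_2=-a\,e_1\otimes e_1+(b-s_1)e_1\otimes e_2+b\,e_2\otimes e_1+(a-s_2)e_2\otimes e_2,\] and such a connection is regular if and only if $s_1\,\bar\partial^2a-s_2\,\bar\partial^1b=0$.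
   Context: Discrete torus model: $\Sigma=\mathbb{Z}_2\times\mathbb{Z}_2$, $x\to y$ iff $y-x\in\{(1,0),(0,1)\}$; diagonal zweibein $e_{1,x,x+(1,0)}=\Theta_1(x)^{-1}$, $e_{2,x,x+(0,1)}=\Theta_2(x)^{-1}$, $\Theta_a$ nowhere-vanishing with $\Theta_1R_1\Theta_2=\Theta_2R_2\Theta_1$; $R_1f(x)=f(x+(1,0))$, $R_2f(x)=f(x+(0,1))$, $\bar\partial^a=R_a-\mathrm{id}$; $e_af=R_a(f)e_a$, $\mathrm{d}f=\sum_a(\bar\partial^af)\Theta_ae_a$; two-forms $e_1\wedge e_2=-e_2\wedge e_1$, $e_a\wedge e_a=0$; $\mathrm{d}e_1=(\bar\partial^1\Theta_2)e_1\wedge e_2$, $\mathrm{d}e_2=-(\bar\partial^2\Theta_1)e_1\wedge e_2$. Frame group $\mathbb{Z}_4$ acting by quarter rotations ($\bar1$: $e_1\mapsto e_2$, $e_2\mapsto-e_1$), calculus $\mathcal C=\{\bar1,\bar3\}$; $f^{\bar1}\triangleright e_1=e_2-e_1$, $f^{\bar1}\triangleright e_2=-e_1-e_2$, $f^{\bar3}\triangleright e_1=-e_1-e_2$, $f^{\bar3}\triangleright e_2=e_1-e_2$. Spin connection: 1-forms $A_{\bar1},A_{\bar3}$. Torsion-free: $\mathrm{d}e_a+\sum_iA_i\wedge(f^i\triangleright e_a)=0$; cotorsion-free: $\mathrm{d}e_a+(f^{\bar3}\triangleright e_a)\wedge A_{\bar1}+(f^{\bar1}\triangleright e_a)\wedge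 A_{\bar3}=0$; regular: $A_{\bar1}\wedge A_{\bar1}+A_{\bar3}\wedge A_{\bar3}=0$. Covariant derivative $\nabla(\sum\alpha^ae_a)=\sum\mathrm{d}\alpha^a\otimes e_a-\sum_{i,a}\alpha^aA_i\otimes f^i\triangleright e_a$. *)

theory Defs
  imports Main "HOL.Real"
begin

text \<open>Discrete torus Sigma = Z2 x Z2, points encoded as pairs of booleans
  (negation = adding 1 mod 2). Functions on Sigma are real valued.\<close>

type_synonym pt = "bool \<times> bool"
type_synonym fn = "pt \<Rightarrow> real"

datatype idx = I1 | I2

text \<open>Elements of the calculus C = {1bar, 3bar} of the frame group Z4.\<close>
datatype cal = C1 | C3

text \<open>One-forms  c_1 e_1 + c_2 e_2 (coefficients on the left),
  two-forms  c e_1 /\ e_2,  elements of Omega^1 (x) Omega^1  sum c_ab e_a (x) e_b.\<close>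
type_synonym oneform = "idx \<Rightarrow> fn"
type_synonym twoform = "fn"
type_synonym tensor = "idx \<Rightarrow> idx \<Rightarrow> fn"

definition R1 :: "fn \<Rightarrow> fn" where "R1 f = (\<lambda>(x, y). f (\<not> x, y))"
definition R2 :: "fn \<Rightarrow> fn" where "R2 f = (\<lambda>(x, y). f (x, \<not> y))"

definition Rsh :: "idx \<Rightarrow> fn \<Rightarrow> fn" where
  "Rsh a = (case a of I1 \<Rightarrow> R1 | I2 \<Rightarrow> R2)"

definition dbar :: "idx \<Rightarrow> fn \<Rightarrow> fn" where
  "dbar a f = (\<lambda>p. Rsh a f p - f p)"

definition theta :: "fn \<Rightarrow> fn \<Rightarrow> idx \<Rightarrow> fn" where
  "theta \<Theta>1 \<Theta>2 a = (case a of I1 \<Rightarrow> \<Theta>1 | I2 \<Rightarrow> \<Theta>2)"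

definition ebas :: "idx \<Rightarrow> oneform" where
  "ebas a = (\<lambda>b p. if b = a then 1 else 0)"

definition dfun :: "fn \<Rightarrow> fn \<Rightarrow> fn \<Rightarrow> oneform" where
  "dfun \<Theta>1 \<Theta>2 f = (\<lambda>a p. dbar a f p * theta \<Theta>1 \<Theta>2 a p)"

definition de :: "fn \<Rightarrow> fn \<Rightarrow> idx \<Rightarrow> twoform" where
  "de \<Theta>1 \<Theta>2 a = (case a of I1 \<Rightarrow> dbar I1 \<Theta>2 | I2 \<Rightarrow> (\<lambda>p. - dbar I2 \<Theta>1 p))"

text \<open>Wedge product, using e_a f = R_a(f) e_a, e_a/\e_a = 0, e_2/\e_1 = - e_1/\e_2.\<close>
definition wedge :: "oneform \<Rightarrow> oneform \<Rightarrow> twoform" where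
  "wedge P Q = (\<lambda>p. P I1 p * Rsh I1 (Q I2) p - P I2 p * Rsh I2 (Q I1) p)"

text \<open>Tensor product over the function algebra, using e_a f = R_a(f) e_a.\<close>
definition tens :: "oneform \<Rightarrow> oneform \<Rightarrow> tensor" where
  "tens P Q = (\<lambda>a b p. P a p * Rsh a (Q b) p)"

definition act :: "cal \<Rightarrow> idx \<Rightarrow> oneform" where
  "act i a = (case (i, a) of
      (C1, I1) \<Rightarrow> (\<lambda>b p. case b of I1 \<Rightarrow> -1 | I2 \<Rightarrow> 1)
    | (C1, I2) \<Rightarrow> (\<lambda>b p. case b of I1 \<Rightarrow> -1 | I2 \<Rightarrow> -1)
    | (C3, I1) \<Rightarrow> (\<lambda>b p. case b of I1 \<Rightarrow> -1 | I2 \<Rightarrow> -1)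
    | (C3, I2) \<Rightarrow> (\<lambda>b p. case b of I1 \<Rightarrow> 1 | I2 \<Rightarrow> -1))"

text \<open>A spin connection is a pair of one-forms A_1bar, A_3bar, i.e. A :: cal => oneform.\<close>

definition torsion_free :: "fn \<Rightarrow> fn \<Rightarrow> (cal \<Rightarrow> oneform) \<Rightarrow> bool" where
  "torsion_free \<Theta>1 \<Theta>2 A \<longleftrightarrow>
     (\<forall>a. (\<lambda>p. de \<Theta>1 \<Theta>2 a p + wedge (A C1) (act C1 a) p + wedge (A C3) (act C3 a) p)
          = (\<lambda>p. 0))"

definition cotorsion_free :: "fn \<Rightarrow> fn \<Rightarrow> (cal \<Rightarrow> oneform) \<Rightarrow> bool" where
  "cotorsion_free \<Theta>1 \<Theta>2 A \<longleftrightarrow>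
     (\<forall>a. (\<lambda>p. de \<Theta>1 \<Theta>2 a p + wedge (act C3 a) (A C1) p + wedge (act C1 a) (A C3) p)
          = (\<lambda>p. 0))"

definition regular :: "(cal \<Rightarrow> oneform) \<Rightarrow> bool" where
  "regular A \<longleftrightarrow> (\<lambda>p. wedge (A C1) (A C1) p + wedge (A C3) (A C3) p) = (\<lambda>p. 0)"

definition nabla :: "fn \<Rightarrow> fn \<Rightarrow> (cal \<Rightarrow> oneform) \<Rightarrow> oneform \<Rightarrow> tensor" where
  "nabla \<Theta>1 \<Theta>2 A \<alpha> = (\<lambda>b c p.
      (\<Sum>a\<in>{I1, I2}. tens (dfun \<Theta>1 \<Theta>2 (\<alpha> a)) (ebas a) b c p)
    - (\<Sum>i\<in>{C1, C3}. \<Sum>a\<in>{I1, I2}. tens (\<lambda>d q. \<alpha> a q * A i d q) (act i a) b c p))"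

definition s1 :: "fn \<Rightarrow> fn" where "s1 \<Theta>1 = dbar I2 \<Theta>1"
definition s2 :: "fn \<Rightarrow> fn" where "s2 \<Theta>2 = dbar I1 \<Theta>2"

definition spin_conn :: "fn \<Rightarrow> fn \<Rightarrow> fn \<Rightarrow> fn \<Rightarrow> cal \<Rightarrow> oneform" where
  "spin_conn \<Theta>1 \<Theta>2 \<alpha> \<beta> = (\<lambda>i. case i of
      C1 \<Rightarrow> (\<lambda>d p. case d of I1 \<Rightarrow> - \<alpha> p - s1 \<Theta>1 p / 2 | I2 \<Rightarrow> \<beta> p - s2 \<Theta>2 p / 2)
    | C3 \<Rightarrow> (\<lambda>d p. case d of I1 \<Rightarrow> \<beta> p - s1 \<Theta>1 p / 2 | I2 \<Rightarrow> \<alpha> p - s2 \<Theta>2 p / 2))"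

end

theory Submission
  imports Defs
begin


lemma idx_all: "(\<forall>a. P a) \<longleftrightarrow> P I1 \<and> P I2" by (metis idx.exhaust)
lemma pt_fun_eq: "(f::pt\<Rightarrow>real) = g \<longleftrightarrow> (\<forall>x y. f (x,y) = g (x,y))" by (auto simp: fun_eq_iff)

lemma dbar1[simp]: "dbar I1 f (x,y) = f (\<not>x,y) - f (x,y)" by (simp add: dbar_def Rsh_def R1_def)
lemma dbar2[simp]: "dbar I2 f (x,y) = f (x,\<not>y) - f (x,y)" by (simp add: dbar_def Rsh_def R2_def)

lemma Rcond: "((\<lambda>p. R1 f p + R2 f p) = (\<lambda>p. 0)) \<longleftrightarrow> (\<forall>x y. f (\<not>x,y) + f (x,\<not>y) = 0)"
  by (simp add: pt_fun_eq R1_def R2_def)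

lemma tf_iff: "torsion_free T1 T2 A \<longleftrightarrow> (\<forall>x y.
   T2 (\<not>x,y) - T2 (x,y) + A C1 I1 (x,y) + A C1 I2 (x,y) - A C3 I1 (x,y) + A C3 I2 (x,y) = 0 \<and>
   - (T1 (x,\<not>y) - T1 (x,y)) - A C1 I1 (x,y) + A C1 I2 (x,y) - A C3 I1 (x,y) - A C3 I2 (x,y) = 0)"
  unfolding torsion_free_def idx_all pt_fun_eq
  by (simp add: de_def wedge_def act_def Rsh_def R1_def R2_def) (auto simp: algebra_simps)

lemma ctf_iff: "cotorsion_free T1 T2 A \<longleftrightarrow> (\<forall>x y.
   T2 (\<not>x,y) - T2 (x,y) - A C1 I2 (\<not>x,y) + A C1 I1 (x,\<not>y) - A C3 I2 (\<not>x,y) - A C3 I1 (x,\<not>y) = 0 \<and>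
   - (T1 (x,\<not>y) - T1 (x,y)) + A C1 I2 (\<not>x,y) + A C1 I1 (x,\<not>y) - A C3 I2 (\<not>x,y) + A C3 I1 (x,\<not>y) = 0)"
  unfolding cotorsion_free_def idx_all pt_fun_eq
  by (simp add: de_def wedge_def act_def Rsh_def R1_def R2_def) (auto simp: algebra_simps)


lemma reg_iff: "regular A \<longleftrightarrow> (\<forall>x y. A C1 I1 (x,y) * A C1 I2 (\<not>x,y) - A C1 I2 (x,y) * A C1 I1 (x,\<not>y)
   + A C3 I1 (x,y) * A C3 I2 (\<not>x,y) - A C3 I2 (x,y) * A C3 I1 (x,\<not>y) = 0)"
  unfolding regular_def pt_fun_eq by (simp add: wedge_def Rsh_def R1_def R2_def algebra_simps)

lemma sc[simp]:
  "spin_conn T1 T2 al be C1 I1 p = - al p - s1 T1 p / 2"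
  "spin_conn T1 T2 al be C1 I2 p = be p - s2 T2 p / 2"
  "spin_conn T1 T2 al be C3 I1 p = be p - s1 T1 p / 2"
  "spin_conn T1 T2 al be C3 I2 p = al p - s2 T2 p / 2"
  by (simp_all add: spin_conn_def)

lemma s12[simp]: "s1 T1 (x,y) = T1 (x,\<not>y) - T1 (x,y)" "s2 T2 (x,y) = T2 (\<not>x,y) - T2 (x,y)"
  by (simp_all add: s1_def s2_def)

theorem proposition4p5:
  fixes \<Theta>1 \<Theta>2 :: "pt \<Rightarrow> real"
  assumes nz1: "\<forall>p. \<Theta>1 p \<noteq> 0"
    and nz2: "\<forall>p. \<Theta>2 p \<noteq> 0"
    and compat: "\<forall>p. \<Theta>1 p * R1 \<Theta>2 p = \<Theta>2 p * R2 \<Theta>1 p"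
  shows "(\<forall>A. (torsion_free \<Theta>1 \<Theta>2 A \<and> cotorsion_free \<Theta>1 \<Theta>2 A) \<longleftrightarrow>
            (\<exists>\<alpha> \<beta>. (\<lambda>p. R1 (\<lambda>q. \<alpha> q + \<beta> q) p + R2 (\<lambda>q. \<alpha> q + \<beta> q) p) = (\<lambda>p. 0)
                 \<and> (\<lambda>p. R1 (\<lambda>q. \<beta> q - \<alpha> q) p + R2 (\<lambda>q. \<beta> q - \<alpha> q) p) = (\<lambda>p. 0)
                 \<and> A = spin_conn \<Theta>1 \<Theta>2 \<alpha> \<beta>))
       \<and> (\<forall>\<alpha> \<beta>. let a = (\<lambda>q. \<alpha> q + \<beta> q); b = (\<lambda>q. \<beta> q - \<alpha> q);
                    A = spin_conn \<Theta>1 \<Theta>2 \<alpha> \<beta> in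
            (\<lambda>p. R1 a p + R2 a p) = (\<lambda>p. 0) \<and> (\<lambda>p. R1 b p + R2 b p) = (\<lambda>p. 0) \<longrightarrow>
              nabla \<Theta>1 \<Theta>2 A (ebas I1) =
                (\<lambda>c d p. case (c, d) of
                    (I1, I1) \<Rightarrow> b p - s1 \<Theta>1 p | (I1, I2) \<Rightarrow> a p
                  | (I2, I1) \<Rightarrow> a p - s2 \<Theta>2 p | (I2, I2) \<Rightarrow> - b p)
            \<and> nabla \<Theta>1 \<Theta>2 A (ebas I2) =
                (\<lambda>c d p. case (c, d) of
                    (I1, I1) \<Rightarrow> - a p | (I1, I2) \<Rightarrow> b p - s1 \<Theta>1 p
                  | (I2, I1) \<Rightarrow> b p | (I2, I2) \<Rightarrow> a p - s2 \<Theta>2 p)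
            \<and> (regular A \<longleftrightarrow>
                 (\<lambda>p. s1 \<Theta>1 p * dbar I2 a p - s2 \<Theta>2 p * dbar I1 b p) = (\<lambda>p. 0)))"
proof (intro conjI allI)
  fix A
  show "(torsion_free \<Theta>1 \<Theta>2 A \<and> cotorsion_free \<Theta>1 \<Theta>2 A) \<longleftrightarrow>
            (\<exists>\<alpha> \<beta>. (\<lambda>p. R1 (\<lambda>q. \<alpha> q + \<beta> q) p + R2 (\<lambda>q. \<alpha> q + \<beta> q) p) = (\<lambda>p. 0)
                 \<and> (\<lambda>p. R1 (\<lambda>q. \<beta> q - \<alpha> q) p + R2 (\<lambda>q. \<beta> q - \<alpha> q) p) = (\<lambda>p. 0)
                 \<and> A = spin_conn \<Theta>1 \<Theta>2 \<alpha> \<beta>)"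
  proof
    assume h: "torsion_free \<Theta>1 \<Theta>2 A \<and> cotorsion_free \<Theta>1 \<Theta>2 A"
    have t: "\<And>x y. \<Theta>2 (\<not>x,y) - \<Theta>2 (x,y) + A C1 I1 (x,y) + A C1 I2 (x,y) - A C3 I1 (x,y) + A C3 I2 (x,y) = 0 \<and>
   - (\<Theta>1 (x,\<not>y) - \<Theta>1 (x,y)) - A C1 I1 (x,y) + A C1 I2 (x,y) - A C3 I1 (x,y) - A C3 I2 (x,y) = 0"
      using h unfolding tf_iff by blast
    have c: "\<And>x y. \<Theta>2 (\<not>x,y) - \<Theta>2 (x,y) - A C1 I2 (\<not>x,y) + A C1 I1 (x,\<not>y) - A C3 I2 (\<not>x,y) - A C3 I1 (x,\<not>y) = 0 \<and>
   - (\<Theta>1 (x,\<not>y) - \<Theta>1 (x,y)) + A C1 I2 (\<not>x,y) + A C1 I1 (x,\<not>y) - A C3 I2 (\<not>x,y) + A C3 I1 (x,\<not>y) = 0"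
      using h unfolding ctf_iff by blast
    note t1 = t[THEN conjunct1] and t2 = t[THEN conjunct2] and c1 = c[THEN conjunct1] and c2 = c[THEN conjunct2]
    define al where "al = (\<lambda>p. A C3 I2 p + s2 \<Theta>2 p / 2)"
    define be where "be = (\<lambda>p. A C3 I1 p + s1 \<Theta>1 p / 2)"
    have alxy: "al (x,y) = A C3 I2 (x,y) + (\<Theta>2 (\<not>x,y) - \<Theta>2 (x,y)) / 2" for x y
      by (simp add: al_def)
    have bexy: "be (x,y) = A C3 I1 (x,y) + (\<Theta>1 (x,\<not>y) - \<Theta>1 (x,y)) / 2" for x y
      by (simp add: be_def)
    show "\<exists>\<alpha> \<beta>. (\<lambda>p. R1 (\<lambda>q. \<alpha> q + \<beta> q) p + R2 (\<lambda>q. \<alpha> q + \<beta> q) p) = (\<lambda>p. 0)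
                 \<and> (\<lambda>p. R1 (\<lambda>q. \<beta> q - \<alpha> q) p + R2 (\<lambda>q. \<beta> q - \<alpha> q) p) = (\<lambda>p. 0)
                 \<and> A = spin_conn \<Theta>1 \<Theta>2 \<alpha> \<beta>"
    proof (intro exI conjI)
      show "(\<lambda>p. R1 (\<lambda>q. al q + be q) p + R2 (\<lambda>q. al q + be q) p) = (\<lambda>p. 0)"
        unfolding Rcond
      proof (intro allI)
        fix x y
        show "al (\<not> x, y) + be (\<not> x, y) + (al (x, \<not> y) + be (x, \<not> y)) = 0"
          using c1[of x y] c2[of x y] t1[of "\<not>x" y] t1[of x "\<not>y"] t2[of "\<not>x" y] t2[of x "\<not>y"] unfolding alxy bexy not_not by argo
      qed
      show "(\<lambda>p. R1 (\<lambda>q. be q - al q) p + R2 (\<lambda>q. be q - al q) p) = (\<lambda>p. 0)"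
        unfolding Rcond
      proof (intro allI)
        fix x y
        show "be (\<not> x, y) - al (\<not> x, y) + (be (x, \<not> y) - al (x, \<not> y)) = 0"
          using c1[of x y] c2[of x y] t1[of "\<not>x" y] t1[of x "\<not>y"] t2[of "\<not>x" y] t2[of x "\<not>y"] unfolding alxy bexy not_not by argo
      qed
      show "A = spin_conn \<Theta>1 \<Theta>2 al be"
      proof (intro ext)
        fix i d and p :: pt
        obtain x y where p: "p = (x,y)" by (cases p)
        show "A i d p = spin_conn \<Theta>1 \<Theta>2 al be i d p"
          using t1[of x y] t2[of x y] unfolding p
          by (cases i; cases d; simp add: alxy bexy; argo)
      qed
    qed
  next
    assume "\<exists>\<alpha> \<beta>. (\<lambda>p. R1 (\<lambda>q. \<alpha> q + \<beta> q) p + R2 (\<lambda>q. \<alpha> q + \<beta> q) p) = (\<lambda>p. 0)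
                 \<and> (\<lambda>p. R1 (\<lambda>q. \<beta> q - \<alpha> q) p + R2 (\<lambda>q. \<beta> q - \<alpha> q) p) = (\<lambda>p. 0)
                 \<and> A = spin_conn \<Theta>1 \<Theta>2 \<alpha> \<beta>"
    then obtain al be where ha: "\<forall>x y. al (\<not>x,y) + be (\<not>x,y) + (al (x,\<not>y) + be (x,\<not>y)) = 0"
      and hb: "\<forall>x y. be (\<not>x,y) - al (\<not>x,y) + (be (x,\<not>y) - al (x,\<not>y)) = 0"
      and hA: "A = spin_conn \<Theta>1 \<Theta>2 al be"
      unfolding Rcond by auto
    show "torsion_free \<Theta>1 \<Theta>2 A \<and> cotorsion_free \<Theta>1 \<Theta>2 A"
      unfolding tf_iff ctf_iff hA
    proof (intro conjI allI)
      fix x y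
      show "\<Theta>2 (\<not> x, y) - \<Theta>2 (x, y) + spin_conn \<Theta>1 \<Theta>2 al be C1 I1 (x, y) + spin_conn \<Theta>1 \<Theta>2 al be C1 I2 (x, y) -
          spin_conn \<Theta>1 \<Theta>2 al be C3 I1 (x, y) + spin_conn \<Theta>1 \<Theta>2 al be C3 I2 (x, y) = 0"
        by simp
      show "- (\<Theta>1 (x, \<not> y) - \<Theta>1 (x, y)) - spin_conn \<Theta>1 \<Theta>2 al be C1 I1 (x, y) + spin_conn \<Theta>1 \<Theta>2 al be C1 I2 (x, y) -
          spin_conn \<Theta>1 \<Theta>2 al be C3 I1 (x, y) - spin_conn \<Theta>1 \<Theta>2 al be C3 I2 (x, y) = 0"
        by simp
      show "\<Theta>2 (\<not> x, y) - \<Theta>2 (x, y) - spin_conn \<Theta>1 \<Theta>2 al be C1 I2 (\<not> x, y) + spin_conn \<Theta>1 \<Theta>2 al be C1 I1 (x, \<not> y) -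
          spin_conn \<Theta>1 \<Theta>2 al be C3 I2 (\<not> x, y) - spin_conn \<Theta>1 \<Theta>2 al be C3 I1 (x, \<not> y) = 0"
        using ha[rule_format, of x y] hb[rule_format, of x y] by simp
      show "- (\<Theta>1 (x, \<not> y) - \<Theta>1 (x, y)) + spin_conn \<Theta>1 \<Theta>2 al be C1 I2 (\<not> x, y) + spin_conn \<Theta>1 \<Theta>2 al be C1 I1 (x, \<not> y) -
          spin_conn \<Theta>1 \<Theta>2 al be C3 I2 (\<not> x, y) + spin_conn \<Theta>1 \<Theta>2 al be C3 I1 (x, \<not> y) = 0"
        using ha[rule_format, of x y] hb[rule_format, of x y] by simp
    qed
  qed
next
  fix al be :: fn
  show "let a = (\<lambda>q. al q + be q); b = (\<lambda>q. be q - al q);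
                    A = spin_conn \<Theta>1 \<Theta>2 al be in
            (\<lambda>p. R1 a p + R2 a p) = (\<lambda>p. 0) \<and> (\<lambda>p. R1 b p + R2 b p) = (\<lambda>p. 0) \<longrightarrow>
              nabla \<Theta>1 \<Theta>2 A (ebas I1) =
                (\<lambda>c d p. case (c, d) of
                    (I1, I1) \<Rightarrow> b p - s1 \<Theta>1 p | (I1, I2) \<Rightarrow> a p
                  | (I2, I1) \<Rightarrow> a p - s2 \<Theta>2 p | (I2, I2) \<Rightarrow> - b p)
            \<and> nabla \<Theta>1 \<Theta>2 A (ebas I2) =
                (\<lambda>c d p. case (c, d) of
                    (I1, I1) \<Rightarrow> - a p | (I1, I2) \<Rightarrow> b p - s1 \<Theta>1 p
                  | (I2, I1) \<Rightarrow> b p | (I2, I2) \<Rightarrow> a p - s2 \<Theta>2 p)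
            \<and> (regular A \<longleftrightarrow>
                 (\<lambda>p. s1 \<Theta>1 p * dbar I2 a p - s2 \<Theta>2 p * dbar I1 b p) = (\<lambda>p. 0))"
    unfolding Let_def
  proof (intro impI conjI)
    assume h: "(\<lambda>p. R1 (\<lambda>q. al q + be q) p + R2 (\<lambda>q. al q + be q) p) = (\<lambda>p. 0) \<and>
      (\<lambda>p. R1 (\<lambda>q. be q - al q) p + R2 (\<lambda>q. be q - al q) p) = (\<lambda>p. 0)"
    then have ha: "\<forall>x y. al (\<not>x,y) + be (\<not>x,y) + (al (x,\<not>y) + be (x,\<not>y)) = 0"
      and hb: "\<forall>x y. be (\<not>x,y) - al (\<not>x,y) + (be (x,\<not>y) - al (x,\<not>y)) = 0"
      unfolding Rcond by auto
    have sa: "al (\<not>x,y) = - al (x,\<not>y)" for x y using ha[rule_format, of x y] hb[rule_format, of x y] by simp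
    have sb: "be (\<not>x,y) = - be (x,\<not>y)" for x y using ha[rule_format, of x y] hb[rule_format, of x y] by simp
    show "nabla \<Theta>1 \<Theta>2 (spin_conn \<Theta>1 \<Theta>2 al be) (ebas I1) =
                (\<lambda>c d p. case (c, d) of
                    (I1, I1) \<Rightarrow> (be p - al p) - s1 \<Theta>1 p | (I1, I2) \<Rightarrow> (al p + be p)
                  | (I2, I1) \<Rightarrow> (al p + be p) - s2 \<Theta>2 p | (I2, I2) \<Rightarrow> - (be p - al p))"
    proof (intro ext)
      fix c d and p :: pt
      obtain x y where p: "p = (x,y)" by (cases p)
      show "nabla \<Theta>1 \<Theta>2 (spin_conn \<Theta>1 \<Theta>2 al be) (ebas I1) c d p = (case (c, d) of
                    (I1, I1) \<Rightarrow> (be p - al p) - s1 \<Theta>1 p | (I1, I2) \<Rightarrow> (al p + be p)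
                  | (I2, I1) \<Rightarrow> (al p + be p) - s2 \<Theta>2 p | (I2, I2) \<Rightarrow> - (be p - al p))"
        unfolding p
        by (cases c; cases d) (simp_all add: nabla_def tens_def dfun_def ebas_def act_def Rsh_def R1_def R2_def dbar_def)
    qed
    show "nabla \<Theta>1 \<Theta>2 (spin_conn \<Theta>1 \<Theta>2 al be) (ebas I2) =
                (\<lambda>c d p. case (c, d) of
                    (I1, I1) \<Rightarrow> - (al p + be p) | (I1, I2) \<Rightarrow> (be p - al p) - s1 \<Theta>1 p
                  | (I2, I1) \<Rightarrow> (be p - al p) | (I2, I2) \<Rightarrow> (al p + be p) - s2 \<Theta>2 p)"
    proof (intro ext)
      fix c d and p :: pt
      obtain x y where p: "p = (x,y)" by (cases p)
      show "nabla \<Theta>1 \<Theta>2 (spin_conn \<Theta>1 \<Theta>2 al be) (ebas I2) c d p = (case (c, d) of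
                    (I1, I1) \<Rightarrow> - (al p + be p) | (I1, I2) \<Rightarrow> (be p - al p) - s1 \<Theta>1 p
                  | (I2, I1) \<Rightarrow> (be p - al p) | (I2, I2) \<Rightarrow> (al p + be p) - s2 \<Theta>2 p)"
        unfolding p
        by (cases c; cases d) (simp_all add: nabla_def tens_def dfun_def ebas_def act_def Rsh_def R1_def R2_def dbar_def)
    qed
    have pw: "2 * (spin_conn \<Theta>1 \<Theta>2 al be C1 I1 (x,y) * spin_conn \<Theta>1 \<Theta>2 al be C1 I2 (\<not>x,y)
      - spin_conn \<Theta>1 \<Theta>2 al be C1 I2 (x,y) * spin_conn \<Theta>1 \<Theta>2 al be C1 I1 (x,\<not>y)
      + spin_conn \<Theta>1 \<Theta>2 al be C3 I1 (x,y) * spin_conn \<Theta>1 \<Theta>2 al be C3 I2 (\<not>x,y)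
      - spin_conn \<Theta>1 \<Theta>2 al be C3 I2 (x,y) * spin_conn \<Theta>1 \<Theta>2 al be C3 I1 (x,\<not>y))
      = s1 \<Theta>1 (x,y) * dbar I2 (\<lambda>q. al q + be q) (x,y) - s2 \<Theta>2 (x,y) * dbar I1 (\<lambda>q. be q - al q) (x,y)"
      for x y
      by (simp add: sa sb field_simps)
    show "regular (spin_conn \<Theta>1 \<Theta>2 al be) \<longleftrightarrow>
       (\<lambda>p. s1 \<Theta>1 p * dbar I2 (\<lambda>q. al q + be q) p - s2 \<Theta>2 p * dbar I1 (\<lambda>q. be q - al q) p) = (\<lambda>p. 0)"
      unfolding reg_iff pt_fun_eq pw[symmetric] by (simp only: mult_eq_0_iff) simp
  qed
qed

end
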